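(* Let $X$ be a K3 quartic surface, let $l\subset X$ be a line of singularity $0$, and suppose $l$ has a twin $l^*$. If $\Pi\supset l$ is a $p$-fiber of $l$, then $\Pi$ corresponds to a branch point of $\pi|_{\hat l}:\hat l\to\mathbb P^1$ (i.e. the fiber of $\pi$ corresponding to $\Pi$ is ramified for $\pi|_{\hat l}$).
   Context: $k$ is algebraically closed of characteristic $\neq 2,3$. A K3 quartic surface is a surface $X \subset \mathbb P^3_k$ of degree 4 whose only singularities are isolated rational double points; $\varphi:Z\to X$ is its minimal desingularization, $\hat C$ the strict transform. For a line $l\subset X$, the planes $\Pi_t\supset l$ cut residual cubics $E_t$ ($\Pi_t\cap X=l+E_t$) and induce an elliptic fibration $\pi:Z\to\mathbb P^1$. A line has singularity 0 if it contains no singular point of $X$ (then $\pi|_{\hat l}$ has degree 3). A plane $\Pi_t\supset l$ is a $p$-fiber of $l$ if $E_t$ splits into three (not necessarily distinct) lines. Two disjoint lines $l, l^*\subset X$ of singularity 0 are twin lines if there are exactly 10 lines on $X$ meeting both; equivalently, $X$ is projectively equivalent to a quartic $x_0 p_0(x_2,x_3)+x_1p_1(x_2,x_3)+x_2p_2(x_0,x_1)+x_3p_3(x_0,x_1)=0$ ($p_i$ binary cubic forms) with $l=\{x_0=x_1=0\}$, $l^*=\{x_2=x_3=0\}$. *)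

theory Defs
  imports "HOL-Library.Poly_Mapping" "HOL-Computational_Algebra.Polynomial"
begin

type_synonym 'k mpoly = "(nat \<Rightarrow>\<^sub>0 nat) \<Rightarrow>\<^sub>0 'k"

definition mp_const :: "'k::field \<Rightarrow> 'k mpoly" where
  "mp_const c = Poly_Mapping.single 0 c"

definition mp_var :: "nat \<Rightarrow> 'k::field mpoly" where
  "mp_var i = Poly_Mapping.single (Poly_Mapping.single i 1) 1"

definition mp_subst :: "'k::field mpoly \<Rightarrow> (nat \<Rightarrow> 'k mpoly) \<Rightarrow> 'k mpoly" where
  "mp_subst p q = (\<Sum>m\<in>Poly_Mapping.keys p. mp_const (Poly_Mapping.lookup p m) *
                      (\<Prod>i\<in>Poly_Mapping.keys m. q i ^ Poly_Mapping.lookup m i))"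

definition mp_eval :: "'k::field mpoly \<Rightarrow> (nat \<Rightarrow> 'k) \<Rightarrow> 'k" where
  "mp_eval p x = (\<Sum>m\<in>Poly_Mapping.keys p. Poly_Mapping.lookup p m * (\<Prod>i\<in>Poly_Mapping.keys m. x i ^ Poly_Mapping.lookup m i))"

definition quartic_form :: "'k::field mpoly \<Rightarrow> bool" where
  "quartic_form F \<longleftrightarrow> F \<noteq> 0 \<and>
     (\<forall>m\<in>Poly_Mapping.keys F. Poly_Mapping.keys m \<subseteq> {0..3} \<and> (\<Sum>i\<in>Poly_Mapping.keys m. Poly_Mapping.lookup m i) = 4)"

text \<open>Partial derivative dF/dx_i at P: the coefficient of t in F(P + t e_i).\<close>
definition pderiv_at :: "'k::field mpoly \<Rightarrow> nat \<Rightarrow> (nat \<Rightarrow> 'k) \<Rightarrow> 'k" where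
  "pderiv_at F i P =
     Poly_Mapping.lookup (mp_subst F (\<lambda>j. mp_const (P j) + (if j = i then mp_var 0 else 0)))
            (Poly_Mapping.single 0 1)"

definition proj_pt :: "(nat \<Rightarrow> 'k::field) \<Rightarrow> bool" where
  "proj_pt P \<longleftrightarrow> (\<exists>j<4. P j \<noteq> 0)"

definition sing_pt :: "'k::field mpoly \<Rightarrow> (nat \<Rightarrow> 'k) \<Rightarrow> bool" where
  "sing_pt F P \<longleftrightarrow> proj_pt P \<and> mp_eval F P = 0 \<and> (\<forall>i<4. pderiv_at F i P = 0)"

type_synonym 'k ps3 = "nat \<times> nat \<times> nat \<Rightarrow> 'k"

definition ps_mult :: "'k::field ps3 \<Rightarrow> 'k ps3 \<Rightarrow> 'k ps3" where
  "ps_mult f g = (\<lambda>(a,b,c). \<Sum>i\<le>a. \<Sum>j\<le>b. \<Sum>l\<le>c. f (i,j,l) * g (a-i, b-j, c-l))"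

definition ps_mono :: "nat \<times> nat \<times> nat \<Rightarrow> 'k::field ps3" where
  "ps_mono e = (\<lambda>m. if m = e then 1 else 0)"

definition ps_add :: "'k::field ps3 \<Rightarrow> 'k ps3 \<Rightarrow> 'k ps3" where
  "ps_add f g = (\<lambda>m. f m + g m)"

definition ps_pow :: "'k::field ps3 \<Rightarrow> nat \<Rightarrow> 'k ps3" where
  "ps_pow f n = ((ps_mult f) ^^ n) (ps_mono (0,0,0))"

text \<open>Composition f(phi0, phi1, phi2), meaningful when the phi_i have no constant term
  (then only finitely many terms contribute to each coefficient).\<close>
definition ps_comp :: "'k::field ps3 \<Rightarrow> 'k ps3 \<Rightarrow> 'k ps3 \<Rightarrow> 'k ps3 \<Rightarrow> 'k ps3" where
  "ps_comp f p0 p1 p2 = (\<lambda>(a,b,c).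
     \<Sum>i\<le>a+b+c. \<Sum>j\<le>a+b+c. \<Sum>l\<le>a+b+c.
       f (i,j,l) * ps_mult (ps_pow p0 i) (ps_mult (ps_pow p1 j) (ps_pow p2 l)) (a,b,c))"

definition ps_auto :: "'k::field ps3 \<Rightarrow> 'k ps3 \<Rightarrow> 'k ps3 \<Rightarrow> bool" where
  "ps_auto p0 p1 p2 \<longleftrightarrow> p0 (0,0,0) = 0 \<and> p1 (0,0,0) = 0 \<and> p2 (0,0,0) = 0 \<and>
     (let M = (\<lambda>r c. (if r = (0::nat) then p0 else if r = 1 then p1 else p2)
                      (if c = (0::nat) then (1,0,0) else if c = 1 then (0,1,0) else (0,0,1)))
      in M 0 0 * (M 1 1 * M 2 2 - M 1 2 * M 2 1)
       - M 0 1 * (M 1 0 * M 2 2 - M 1 2 * M 2 0)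
       + M 0 2 * (M 1 0 * M 2 1 - M 1 1 * M 2 0) \<noteq> 0)"

definition contact_equiv :: "'k::field ps3 \<Rightarrow> 'k ps3 \<Rightarrow> bool" where
  "contact_equiv f g \<longleftrightarrow> (\<exists>u p0 p1 p2. u (0,0,0) \<noteq> 0 \<and> ps_auto p0 p1 p2 \<and>
       f = ps_mult u (ps_comp g p0 p1 p2))"

text \<open>ADE normal forms (x = y0, y = y1, z = y2).  In characteristic 5 Artin's
  classification has the extra form E_8^1; it is included (for char <> 5 it is
  equivalent to E_8).\<close>
definition ADE_forms :: "'k::field ps3 set" where
  "ADE_forms =
     {ps_add (ps_mono (2,0,0)) (ps_add (ps_mono (0,2,0)) (ps_mono (0,0,n+1))) | n. n \<ge> 1}
   \<union> {ps_add (ps_mono (2,0,0)) (ps_add (ps_mono (0,2,1)) (ps_mono (0,0,n-1))) | n. n \<ge> 4}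
   \<union> {ps_add (ps_mono (2,0,0)) (ps_add (ps_mono (0,3,0)) (ps_mono (0,0,4))),
      ps_add (ps_mono (2,0,0)) (ps_add (ps_mono (0,3,0)) (ps_mono (0,1,3))),
      ps_add (ps_mono (2,0,0)) (ps_add (ps_mono (0,3,0)) (ps_mono (0,0,5))),
      ps_add (ps_mono (2,0,0)) (ps_add (ps_mono (0,3,0))
                  (ps_add (ps_mono (0,0,5)) (ps_mono (0,1,4))))}"

definition rational_double_point_germ :: "'k::field ps3 \<Rightarrow> bool" where
  "rational_double_point_germ f \<longleftrightarrow> (\<exists>N\<in>ADE_forms. contact_equiv f N)"

text \<open>Local equation of {F=0} at P in the affine chart x_i <> 0 (i with P i <> 0),
  the remaining three coordinates (in increasing order) becoming y0,y1,y2.\<close>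
definition local_germ :: "'k::field mpoly \<Rightarrow> (nat \<Rightarrow> 'k) \<Rightarrow> nat \<Rightarrow> 'k ps3" where
  "local_germ F P i = (\<lambda>(a,b,c).
     Poly_Mapping.lookup (mp_subst F (\<lambda>j. mp_const (P j) +
                (if j = i then 0 else mp_var (if j < i then j else j - 1))))
            (Poly_Mapping.single 0 a + Poly_Mapping.single 1 b + Poly_Mapping.single 2 c))"

definition K3_quartic :: "'k::field mpoly \<Rightarrow> bool" where
  "K3_quartic F \<longleftrightarrow> quartic_form F \<and>
     (\<forall>P. sing_pt F P \<longrightarrow> rational_double_point_germ (local_germ F P (LEAST i. P i \<noteq> 0)))"

definition bin_cubic :: "(nat \<Rightarrow> 'k::field) \<Rightarrow> nat \<Rightarrow> nat \<Rightarrow> 'k mpoly" where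
  "bin_cubic c u v = (\<Sum>j\<le>3. mp_const (c j) * mp_var u ^ (3 - j) * mp_var v ^ j)"

definition twin_normal_form ::
  "(nat \<Rightarrow> 'k::field) \<Rightarrow> (nat \<Rightarrow> 'k) \<Rightarrow> (nat \<Rightarrow> 'k) \<Rightarrow> (nat \<Rightarrow> 'k) \<Rightarrow> 'k mpoly" where
  "twin_normal_form c0 c1 c2 c3 =
      mp_var 0 * bin_cubic c0 2 3 + mp_var 1 * bin_cubic c1 2 3
    + mp_var 2 * bin_cubic c2 0 1 + mp_var 3 * bin_cubic c3 0 1"

definition coord_line_sing0 :: "'k::field mpoly \<Rightarrow> nat \<Rightarrow> nat \<Rightarrow> bool" where
  "coord_line_sing0 F i j \<longleftrightarrow> \<not> (\<exists>P. sing_pt F P \<and> P i = 0 \<and> P j = 0)"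

definition lin_form :: "(nat \<Rightarrow> 'k::field) \<Rightarrow> (nat \<Rightarrow> 'k) \<Rightarrow> 'k" where
  "lin_form w x = (\<Sum>j<4. w j * x j)"

text \<open>The plane Pi = {a x_0 + b x_1 = 0} containing l = {x_0 = x_1 = 0} is a p-fiber:
  the residual cubic E in Pi \<inter> X = l + E splits into three lines, i.e. F restricted to Pi
  is (equation of l in Pi) times a product of three linear forms, none vanishing on Pi.\<close>
definition p_fiber :: "'k::field mpoly \<Rightarrow> 'k \<Rightarrow> 'k \<Rightarrow> bool" where
  "p_fiber F a b \<longleftrightarrow> (\<exists>M0 L1 L2 L3.
      M0 2 = 0 \<and> M0 3 = 0 \<and>
      (\<forall>w\<in>{M0, L1, L2, L3}. \<exists>x. a * x 0 + b * x 1 = 0 \<and> lin_form w x \<noteq> 0) \<and>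
      (\<forall>x. a * x 0 + b * x 1 = 0 \<longrightarrow>
           mp_eval F x = lin_form M0 x * lin_form L1 x * lin_form L2 x * lin_form L3 x))"

definition pt_on_l :: "'k::field \<Rightarrow> 'k \<Rightarrow> nat \<Rightarrow> 'k" where
  "pt_on_l y z = (\<lambda>j. if j = 2 then y else if j = 3 then z else 0)"

text \<open>For l = {x_0 = x_1 = 0} of singularity 0, pi restricted to l sends P in l to its
  tangent plane dF/dx_0(P) x_0 + dF/dx_1(P) x_1 = 0.  The fiber over the plane
  a x_0 + b x_1 = 0 is the zero set on l of the binary cubic
  b dF/dx_0 - a dF/dx_1; the plane is a branch point iff that fiber has a multiple point,
  i.e. the binary cubic has a repeated linear factor (v y - u z)^2.\<close>
definition branch_plane :: "'k::field mpoly \<Rightarrow> 'k \<Rightarrow> 'k \<Rightarrow> bool" where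
  "branch_plane F a b \<longleftrightarrow> (\<exists>u v r s. (u, v) \<noteq> (0, 0) \<and>
     (\<forall>y z. b * pderiv_at F 0 (pt_on_l y z) - a * pderiv_at F 1 (pt_on_l y z)
            = (v * y - u * z)^2 * (r * y + s * z)))"

definition alg_closed_field :: "'k::field itself \<Rightarrow> bool" where
  "alg_closed_field _ \<longleftrightarrow> (\<forall>p::'k poly. degree p > 0 \<longrightarrow> (\<exists>x. poly p x = 0))"

end

theory Submission
  imports Defs
begin


definition mon :: "(nat \<Rightarrow>\<^sub>0 nat) \<Rightarrow> (nat \<Rightarrow> 'r::comm_ring_1) \<Rightarrow> 'r" where
  "mon m x = (\<Prod>i\<in>Poly_Mapping.keys m. x i ^ Poly_Mapping.lookup m i)"

definition gev :: "('k::field \<Rightarrow> 'r::comm_ring_1) \<Rightarrow> (nat \<Rightarrow> 'r) \<Rightarrow> 'k mpoly \<Rightarrow> 'r" where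
  "gev f x p = (\<Sum>m\<in>Poly_Mapping.keys p. f (Poly_Mapping.lookup p m) * mon m x)"

lemma mon_superset:
  assumes "finite S" "Poly_Mapping.keys m \<subseteq> S"
  shows "mon m x = (\<Prod>i\<in>S. x i ^ Poly_Mapping.lookup m i)"
  unfolding mon_def
  by (rule prod.mono_neutral_left) (use assms in \<open>auto simp: in_keys_iff\<close>)

lemma mon_add: "mon (m1 + m2) x = mon m1 x * mon m2 x"
proof -
  let ?S = "Poly_Mapping.keys m1 \<union> Poly_Mapping.keys m2"
  have "mon (m1 + m2) x = (\<Prod>i\<in>?S. x i ^ Poly_Mapping.lookup (m1+m2) i)"
    by (rule mon_superset) (auto dest: set_mp[OF keys_add])
  also have "\<dots> = (\<Prod>i\<in>?S. x i ^ Poly_Mapping.lookup m1 i) * (\<Prod>i\<in>?S. x i ^ Poly_Mapping.lookup m2 i)"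
    by (simp add: lookup_add power_add prod.distrib)
  also have "\<dots> = mon m1 x * mon m2 x"
    by (subst (1 2) mon_superset[of ?S]) auto
  finally show ?thesis .
qed

lemma mon_zero [simp]: "mon 0 x = 1"
  by (simp add: mon_def)

lemma mon_single [simp]: "mon (Poly_Mapping.single i k) x = x i ^ k"
  by (cases "k = 0") (simp_all add: mon_def)

locale rhom =
  fixes f :: "'k::field \<Rightarrow> 'r::comm_ring_1"
  assumes f0: "f 0 = 0" and f1: "f 1 = 1" and fadd: "f (a + b) = f a + f b"
    and fmul: "f (a * b) = f a * f b"
begin

lemma gev_superset:
  assumes "finite S" "Poly_Mapping.keys p \<subseteq> S"
  shows "gev f x p = (\<Sum>m\<in>S. f (Poly_Mapping.lookup p m) * mon m x)"
  unfolding gev_def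
  by (rule sum.mono_neutral_left) (use assms in \<open>auto simp: in_keys_iff f0\<close>)

lemma gev_add: "gev f x (p + q) = gev f x p + gev f x q"
  unfolding gev_def
  by (rule setsum_keys_plus_distrib) (simp_all add: f0 fadd algebra_simps)

lemma gev_zero [simp]: "gev f x 0 = 0"
  by (simp add: gev_def)

lemma gev_single [simp]: "gev f x (Poly_Mapping.single m c) = f c * mon m x"
  by (cases "c = 0") (simp_all add: gev_def f0)

lemma gev_sum: "gev f x (sum g A) = (\<Sum>a\<in>A. gev f x (g a))"
  by (induction A rule: infinite_finite_induct) (simp_all add: gev_add)

lemma expand: "p = (\<Sum>m\<in>Poly_Mapping.keys p. Poly_Mapping.single m (Poly_Mapping.lookup p m))"
  by (rule poly_mapping_eqI)
     (auto simp: lookup_sum lookup_single when_def in_keys_iff sum.delta' )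

lemma gev_mult: "gev f x (p * q) = gev f x p * gev f x q"
proof -
  have "p * q = (\<Sum>m\<in>Poly_Mapping.keys p. Poly_Mapping.single m (Poly_Mapping.lookup p m))
      * (\<Sum>m\<in>Poly_Mapping.keys q. Poly_Mapping.single m (Poly_Mapping.lookup q m))"
    by (rule arg_cong2[where f="(*)"]; rule expand)
  also have "\<dots> = (\<Sum>m\<in>Poly_Mapping.keys p. \<Sum>n\<in>Poly_Mapping.keys q.
      Poly_Mapping.single (m + n) (Poly_Mapping.lookup p m * Poly_Mapping.lookup q n))"
    by (simp add: sum_distrib_left sum_distrib_right mult_single) (rule sum.swap)
  finally have "gev f x (p * q) = gev f x (\<Sum>m\<in>Poly_Mapping.keys p. \<Sum>n\<in>Poly_Mapping.keys q.
      Poly_Mapping.single (m + n) (Poly_Mapping.lookup p m * Poly_Mapping.lookup q n))" by simp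
  then have "gev f x (p * q) = (\<Sum>m\<in>Poly_Mapping.keys p. \<Sum>n\<in>Poly_Mapping.keys q.
      f (Poly_Mapping.lookup p m) * mon m x * (f (Poly_Mapping.lookup q n) * mon n x))"
    by (simp add: gev_sum fmul mon_add algebra_simps)
  also have "\<dots> = gev f x p * gev f x q"
    by (simp add: gev_def sum_distrib_left sum_distrib_right) (rule sum.swap)
  finally show ?thesis .
qed

lemma gev_one [simp]: "gev f x 1 = 1"
proof -
  have "gev f x (Poly_Mapping.single 0 1) = 1" by (simp only: gev_single f1 mon_zero mult_1)
  then show ?thesis by (simp only: single_one)
qed

lemma gev_pow: "gev f x (p ^ n) = gev f x p ^ n"
  by (induction n) (simp_all add: gev_mult)

lemma gev_const [simp]: "gev f x (mp_const c) = f c"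
  by (simp add: mp_const_def)

lemma gev_var [simp]: "gev f x (mp_var i) = x i"
  by (simp add: mp_var_def f1)

lemma gev_minus: "gev f x (p - q) = gev f x p - gev f x q"
  using gev_add[of x "p - q" q] by simp

definition bcg :: "(nat \<Rightarrow> 'k) \<Rightarrow> 'r \<Rightarrow> 'r \<Rightarrow> 'r" where
  "bcg c u v = (\<Sum>j\<le>3. f (c j) * u ^ (3 - j) * v ^ j)"

lemma gev_bin_cubic: "gev f x (bin_cubic c u v) = bcg c (x u) (x v)"
  by (simp add: bin_cubic_def bcg_def gev_sum gev_mult gev_pow)

lemma gev_twin: "gev f x (twin_normal_form c0 c1 c2 c3) =
   x 0 * bcg c0 (x 2) (x 3) + x 1 * bcg c1 (x 2) (x 3) + x 2 * bcg c2 (x 0) (x 1) + x 3 * bcg c3 (x 0) (x 1)"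
  by (simp add: twin_normal_form_def gev_add gev_mult gev_bin_cubic)

end

interpretation idh: rhom "\<lambda>a::'k::field. a"
  by unfold_locales auto

interpretation ch: rhom "mp_const :: 'k::field \<Rightarrow> 'k mpoly"
  by unfold_locales (simp_all add: mp_const_def single_add mult_single)

lemma mp_eval_gev: "mp_eval p x = gev (\<lambda>a. a) x p"
  by (simp add: mp_eval_def gev_def mon_def)

lemma mp_subst_gev: "mp_subst p q = gev mp_const q p"
  by (simp add: mp_subst_def gev_def mon_def)


lemma (in rhom) bcg_expand:
  "bcg c u v = f (c 0) * u ^ 3 + f (c 1) * u\<^sup>2 * v + f (c 2) * u * v\<^sup>2 + f (c 3) * v ^ 3"
  by (simp add: bcg_def numeral_3_eq_3 numeral_2_eq_2 atMost_Suc)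

definition bc :: "(nat \<Rightarrow> 'k::field) \<Rightarrow> 'k \<Rightarrow> 'k \<Rightarrow> 'k" where
  "bc c u v = c 0 * u ^ 3 + c 1 * u\<^sup>2 * v + c 2 * u * v\<^sup>2 + c 3 * v ^ 3"

lemma mp_eval_twin: "mp_eval (twin_normal_form c0 c1 c2 c3) x =
   x 0 * bc c0 (x 2) (x 3) + x 1 * bc c1 (x 2) (x 3) + x 2 * bc c2 (x 0) (x 1) + x 3 * bc c3 (x 0) (x 1)"
  by (simp add: mp_eval_gev idh.gev_twin idh.bcg_expand bc_def)

lemma const_mult [simp]: "mp_const a * mp_const b = mp_const (a * b)"
  by (simp add: mp_const_def mult_single)
lemma const_add [simp]: "mp_const a + mp_const b = mp_const (a + b)"
  by (simp add: mp_const_def single_add)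
lemma const_pow [simp]: "mp_const a ^ n = mp_const (a ^ n)"
  by (induction n) (simp_all add: mp_const_def mult_single)
lemma const_zero [simp]: "mp_const 0 = 0"
  by (simp add: mp_const_def)
lemma lookup_const_mult [simp]: "Poly_Mapping.lookup (mp_const c * p) k = c * Poly_Mapping.lookup p k"
  by (simp add: mp_const_def mult_map_scale_conv_mult[symmetric] map.rep_eq when_def)
lemma lookup_mult_const [simp]: "Poly_Mapping.lookup (p * mp_const c) k = c * Poly_Mapping.lookup p k"
  by (metis lookup_const_mult mult.commute)
lemma var_pow: "mp_var i ^ n = Poly_Mapping.single (Poly_Mapping.single i n) (1::'k::field)"
  by (induction n) (simp_all add: mp_var_def mult_single single_add[symmetric])
lemma lookup_var0_pow [simp]:
  "Poly_Mapping.lookup (mp_var 0 ^ n) (Poly_Mapping.single 0 1) = (if n = 1 then (1::'k::field) else 0)"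
  by (simp add: var_pow lookup_single when_def) (metis inj_single injD)
lemma lookup_var0 [simp]:
  "Poly_Mapping.lookup (mp_var 0) (Poly_Mapping.single 0 1) = (1::'k::field)"
  using lookup_var0_pow[of 1] by simp
lemma lookup_var0_pow' [simp]:
  "Poly_Mapping.lookup (mp_var 0 ^ n) (Poly_Mapping.single 0 (Suc 0)) = (if n = 1 then (1::'k::field) else 0)"
  by (metis lookup_var0_pow One_nat_def)
lemma lookup_var0' [simp]:
  "Poly_Mapping.lookup (mp_var 0) (Poly_Mapping.single 0 (Suc 0)) = (1::'k::field)"
  by (metis lookup_var0 One_nat_def)

lemma pderiv_twin:
  "pderiv_at (twin_normal_form c0 c1 c2 c3) i P =
   Poly_Mapping.lookup (
     (mp_const (P 0) + (if 0 = i then mp_var 0 else 0)) * ch.bcg c0 (mp_const (P 2) + (if 2 = i then mp_var 0 else 0)) (mp_const (P 3) + (if 3 = i then mp_var 0 else 0))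
   + (mp_const (P 1) + (if 1 = i then mp_var 0 else 0)) * ch.bcg c1 (mp_const (P 2) + (if 2 = i then mp_var 0 else 0)) (mp_const (P 3) + (if 3 = i then mp_var 0 else 0))
   + (mp_const (P 2) + (if 2 = i then mp_var 0 else 0)) * ch.bcg c2 (mp_const (P 0) + (if 0 = i then mp_var 0 else 0)) (mp_const (P 1) + (if 1 = i then mp_var 0 else 0))
   + (mp_const (P 3) + (if 3 = i then mp_var 0 else 0)) * ch.bcg c3 (mp_const (P 0) + (if 0 = i then mp_var 0 else 0)) (mp_const (P 1) + (if 1 = i then mp_var 0 else 0)))
   (Poly_Mapping.single 0 1)"
  unfolding pderiv_at_def mp_subst_gev ch.gev_twin by simp

lemma pderiv_l0: "pderiv_at (twin_normal_form c0 c1 c2 c3) 0 (pt_on_l y z) = bc c0 y z"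
  by (simp add: pderiv_twin ch.bcg_expand pt_on_l_def bc_def lookup_add)

lemma pderiv_l1: "pderiv_at (twin_normal_form c0 c1 c2 c3) (Suc 0) (pt_on_l y z) = bc c1 y z"
  by (simp add: pderiv_twin ch.bcg_expand pt_on_l_def bc_def lookup_add)

definition Pst :: "'k::field \<Rightarrow> 'k \<Rightarrow> nat \<Rightarrow> 'k" where
  "Pst a b = (\<lambda>j. if j = 0 then - b else if j = 1 then a else 0)"

lemma pderiv_P0: "pderiv_at (twin_normal_form c0 c1 c2 c3) 0 (Pst a b) = 0"
  by (simp add: pderiv_twin ch.bcg_expand Pst_def lookup_add)
lemma pderiv_P1: "pderiv_at (twin_normal_form c0 c1 c2 c3) 1 (Pst a b) = 0"
  by (simp add: pderiv_twin ch.bcg_expand Pst_def lookup_add)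
lemma pderiv_P2: "pderiv_at (twin_normal_form c0 c1 c2 c3) 2 (Pst a b) = bc c2 (-b) a"
  by (simp add: pderiv_twin ch.bcg_expand Pst_def lookup_add bc_def)
lemma pderiv_P3: "pderiv_at (twin_normal_form c0 c1 c2 c3) 3 (Pst a b) = bc c3 (-b) a"
  by (simp add: pderiv_twin ch.bcg_expand Pst_def lookup_add bc_def)



lemma cubic_zero:
  fixes c0 c1 c2 c3 :: "'k::field"
  assumes two: "(2::'k) \<noteq> 0" and three: "(3::'k) \<noteq> 0"
    and h: "\<And>t. t \<noteq> 0 \<Longrightarrow> c3 * t ^ 3 + c2 * t ^ 2 + c1 * t + c0 = 0"
  shows "c0 = 0 \<and> c1 = 0 \<and> c2 = 0 \<and> c3 = 0"
proof -
  have e1: "c3 + c2 + c1 + c0 = 0" using h[of 1] by simp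
  have e2: "- c3 + c2 - c1 + c0 = 0" using h[of "-1"] by simp
  have e3: "c3 * 8 + c2 * 4 + c1 * 2 + c0 = 0" using h[of 2] two by simp
  have e4: "- (c3 * 8) + c2 * 4 - c1 * 2 + c0 = 0" using h[of "-2"] two by simp
  have s1: "2 * (c2 + c0) = 0"
  proof -
    have q: "2 * (c2 + c0) = (c3 + c2 + c1 + c0) + (- c3 + c2 - c1 + c0)" by (simp add: algebra_simps mult_2)
    then show ?thesis by (subst q) (simp only: e1 e2 add_0_left diff_self)
  qed
  have s2: "2 * (c3 + c1) = 0"
  proof -
    have q: "2 * (c3 + c1) = (c3 + c2 + c1 + c0) - (- c3 + c2 - c1 + c0)" by (simp add: algebra_simps mult_2)
    then show ?thesis by (subst q) (simp only: e1 e2 add_0_left diff_self)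
  qed
  have "c2 + c0 = 0" using s1 two by (metis mult_eq_0_iff)
  then have a: "c2 = - c0" by (simp add: eq_neg_iff_add_eq_0)
  have "c1 + c3 = 0" using s2 two by (metis mult_eq_0_iff add.commute)
  then have b: "c1 = - c3" by (simp add: eq_neg_iff_add_eq_0)
  have s3: "c0 * 6 = 0"
  proof -
    have q: "c0 * 6 = - ((c3 * 8 + c2 * 4 + c1 * 2 + c0) + (- (c3 * 8) + c2 * 4 - c1 * 2 + c0)) / 2 * 2"
      using a two by (simp add: algebra_simps)
    then show ?thesis by (subst q) (simp only: e3 e4 add_0_left diff_self minus_zero div_0 mult_zero_left)
  qed
  have six: "(6::'k) \<noteq> 0"
  proof -
    have q: "(6::'k) = 2 * 3" by simp
    then show ?thesis using two three by (metis mult_eq_0_iff)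
  qed
  have c: "c0 = 0" using s3 six by simp
  have s4: "c3 * 6 = 0"
  proof -
    have q: "c3 * 6 = ((c3 * 8 + c2 * 4 + c1 * 2 + c0) - (- (c3 * 8) + c2 * 4 - c1 * 2 + c0)) / 2"
      using b two by (simp add: algebra_simps)
    then show ?thesis by (subst q) (simp only: e3 e4 add_0_left diff_self minus_zero div_0 mult_zero_left)
  qed
  have d: "c3 = 0" using s4 six by simp
  show ?thesis using a b c d by simp
qed


lemma lin_zero2:
  fixes p q g h :: "'k::field"
  assumes "\<And>y z. (p * y + q * z) * (g * y + h * z) = 0" and "p \<noteq> 0 \<or> q \<noteq> 0"
  shows "g = 0 \<and> h = 0"
proof -
  have 1: "p * g = 0" using assms(1)[of 1 0] by simp
  have 2: "q * h = 0" using assms(1)[of 0 1] by simp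
  have 3: "(p + q) * (g + h) = 0" using assms(1)[of 1 1] by simp
  have e: "p * h + q * g = (p + q) * (g + h) - p * g - q * h" by (simp add: algebra_simps)
  have 4: "p * h + q * g = 0" by (subst e) (simp only: 1 2 3 diff_self)
  show ?thesis
  proof (cases "p = 0")
    case True
    then have "q \<noteq> 0" using assms(2) by simp
    then show ?thesis using 2 4 True by simp
  next
    case False
    then show ?thesis using 1 4 by auto
  qed
qed

lemma core0:
  fixes \<mu> \<alpha> \<beta> a1 a2 a3 p1 q1 p2 q2 p3 q3 :: "'k::field" and Q :: "'k \<Rightarrow> 'k \<Rightarrow> 'k"
  assumes mu: "\<mu> \<noteq> 0" and ab: "\<alpha> \<noteq> 0 \<or> \<beta> \<noteq> 0" and a3: "a3 = 0"
    and h2: "\<And>y z. y * \<alpha> + z * \<beta> = \<mu> * (a1 * a2 * (p3 * y + q3 * z) + a1 * a3 * (p2 * y + q2 * z) + a2 * a3 * (p1 * y + q1 * z))"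
    and h1: "\<And>y z. a1 * (p2 * y + q2 * z) * (p3 * y + q3 * z) + a2 * (p1 * y + q1 * z) * (p3 * y + q3 * z)
                + a3 * (p1 * y + q1 * z) * (p2 * y + q2 * z) = 0"
    and h0: "\<And>y z. Q y z = \<mu> * (p1 * y + q1 * z) * (p2 * y + q2 * z) * (p3 * y + q3 * z)"
  shows "\<exists>u v r s. (u, v) \<noteq> (0, 0) \<and> (\<forall>y z. Q y z = (v * y - u * z)^2 * (r * y + s * z))"
proof -
  have al: "\<alpha> = \<mu> * a1 * a2 * p3" using h2[of 1 0] a3 by simp
  have be: "\<beta> = \<mu> * a1 * a2 * q3" using h2[of 0 1] a3 by simp
  have a1: "a1 \<noteq> 0" and a2: "a2 \<noteq> 0" and pq3: "p3 \<noteq> 0 \<or> q3 \<noteq> 0" using ab al be by auto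
  have "\<And>y z. (p3 * y + q3 * z) * ((a1 * p2 + a2 * p1) * y + (a1 * q2 + a2 * q1) * z) = 0"
  proof -
    fix y z
    have "(p3 * y + q3 * z) * ((a1 * p2 + a2 * p1) * y + (a1 * q2 + a2 * q1) * z) =
       a1 * (p2 * y + q2 * z) * (p3 * y + q3 * z) + a2 * (p1 * y + q1 * z) * (p3 * y + q3 * z)
                + a3 * (p1 * y + q1 * z) * (p2 * y + q2 * z)" using a3 by (simp add: algebra_simps)
    then show "(p3 * y + q3 * z) * ((a1 * p2 + a2 * p1) * y + (a1 * q2 + a2 * q1) * z) = 0" using h1 by simp
  qed
  from lin_zero2[OF this pq3] have g: "a1 * p2 + a2 * p1 = 0" "a1 * q2 + a2 * q1 = 0" by auto
  have p2: "p2 = - a2 * p1 / a1" using g(1) a1 by (simp add: field_simps eq_neg_iff_add_eq_0)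
  have q2: "q2 = - a2 * q1 / a1" using g(2) a1 by (simp add: field_simps eq_neg_iff_add_eq_0)
  define k where "k = - \<mu> * a2 / a1"
  have Qf: "Q y z = (p1 * y + q1 * z)^2 * (k * p3 * y + k * q3 * z)" for y z
    unfolding h0 p2 q2 k_def using a1 by (simp add: field_simps power2_eq_square)
  show ?thesis
  proof (cases "p1 = 0 \<and> q1 = 0")
    case True
    show ?thesis
      by (rule exI[of _ 1], rule exI[of _ 0], rule exI[of _ 0], rule exI[of _ 0]) (simp add: Qf True)
  next
    case False
    show ?thesis
      by (rule exI[of _ "- q1"], rule exI[of _ p1], rule exI[of _ "k * p3"], rule exI[of _ "k * q3"])
         (use False in \<open>auto simp: Qf\<close>)
  qed
qed


lemma core:
  fixes \<mu> \<alpha> \<beta> a1 a2 a3 p1 q1 p2 q2 p3 q3 :: "'k::field" and Q :: "'k \<Rightarrow> 'k \<Rightarrow> 'k"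
  assumes mu: "\<mu> \<noteq> 0" and ab: "\<alpha> \<noteq> 0 \<or> \<beta> \<noteq> 0" and h3: "\<mu> * a1 * a2 * a3 = 0"
    and h2: "\<And>y z. y * \<alpha> + z * \<beta> = \<mu> * (a1 * a2 * (p3 * y + q3 * z) + a1 * a3 * (p2 * y + q2 * z) + a2 * a3 * (p1 * y + q1 * z))"
    and h1: "\<And>y z. a1 * (p2 * y + q2 * z) * (p3 * y + q3 * z) + a2 * (p1 * y + q1 * z) * (p3 * y + q3 * z)
                + a3 * (p1 * y + q1 * z) * (p2 * y + q2 * z) = 0"
    and h0: "\<And>y z. Q y z = \<mu> * (p1 * y + q1 * z) * (p2 * y + q2 * z) * (p3 * y + q3 * z)"
  shows "\<exists>u v r s. (u, v) \<noteq> (0, 0) \<and> (\<forall>y z. Q y z = (v * y - u * z)^2 * (r * y + s * z))"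
proof -
  have "a3 = 0 \<or> a2 = 0 \<or> a1 = 0" using h3 mu by auto
  then show ?thesis
  proof (elim disjE)
    assume "a3 = 0"
    then show ?thesis by (rule core0[OF mu ab _ h2 h1 h0])
  next
    assume z: "a2 = 0"
    have g2: "y * \<alpha> + z * \<beta> = \<mu> * (a1 * a3 * (p2 * y + q2 * z) + a1 * a2 * (p3 * y + q3 * z) + a3 * a2 * (p1 * y + q1 * z))" for y z
      using h2[of y z] by (simp add: algebra_simps)
    have g1: "a1 * (p3 * y + q3 * z) * (p2 * y + q2 * z) + a3 * (p1 * y + q1 * z) * (p2 * y + q2 * z) + a2 * (p1 * y + q1 * z) * (p3 * y + q3 * z) = 0" for y z
      using h1[of y z] by (simp add: algebra_simps)
    have g0: "Q y z = \<mu> * (p1 * y + q1 * z) * (p3 * y + q3 * z) * (p2 * y + q2 * z)" for y z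
      using h0[of y z] by (simp add: algebra_simps)
    show ?thesis by (rule core0[OF mu ab z g2 g1 g0])
  next
    assume z: "a1 = 0"
    have g2: "y * \<alpha> + z * \<beta> = \<mu> * (a2 * a3 * (p1 * y + q1 * z) + a2 * a1 * (p3 * y + q3 * z) + a3 * a1 * (p2 * y + q2 * z))" for y z
      using h2[of y z] by (simp add: algebra_simps)
    have g1: "a2 * (p3 * y + q3 * z) * (p1 * y + q1 * z) + a3 * (p2 * y + q2 * z) * (p1 * y + q1 * z) + a1 * (p2 * y + q2 * z) * (p3 * y + q3 * z) = 0" for y z
      using h1[of y z] by (simp add: algebra_simps)
    have g0: "Q y z = \<mu> * (p2 * y + q2 * z) * (p3 * y + q3 * z) * (p1 * y + q1 * z)" for y z
      using h0[of y z] by (simp add: algebra_simps)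
    show ?thesis by (rule core0[OF mu ab z g2 g1 g0])
  qed
qed



lemma lin_form_expand: "lin_form w x = w 0 * x 0 + w 1 * x 1 + w 2 * x 2 + w 3 * x 3"
  by (simp add: lin_form_def numeral_eq_Suc lessThan_Suc)

lemma bc_hom: "bc c (u * t) (v * t) = t ^ 3 * bc c u v"
  by (simp add: bc_def algebra_simps power2_eq_square power3_eq_cube)

lemma expand_id:
  fixes t Q y z \<alpha> \<beta> \<mu> a1 a2 a3 l1 l2 l3 :: "'k::field"
  shows "t * Q + t ^ 3 * (y * \<alpha> + z * \<beta>) - (\<mu> * t) * ((a1 * t + l1) * (a2 * t + l2) * (a3 * t + l3))
   = t * ((- \<mu> * a1 * a2 * a3) * t ^ 3 + (y * \<alpha> + z * \<beta> - \<mu> * (a1 * a2 * l3 + a1 * a3 * l2 + a2 * a3 * l1)) * t ^ 2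
          + (- \<mu> * (a1 * l2 * l3 + a2 * l1 * l3 + a3 * l1 * l2)) * t + (Q - \<mu> * l1 * l2 * l3))"
  by (simp add: algebra_simps power2_eq_square power3_eq_cube)

lemma det2:
  fixes a b m0 m1 x0 x1 :: "'k::field"
  assumes "a * x0 + b * x1 = 0" "a * m1 - b * m0 = 0" "(a, b) \<noteq> (0, 0)"
  shows "m0 * x0 + m1 * x1 = 0"
proof -
  have "a * (m0 * x0 + m1 * x1) = m0 * (a * x0 + b * x1) - x1 * (b * m0 - a * m1)" by (simp add: algebra_simps)
  also have "\<dots> = 0" using assms by (simp add: algebra_simps)
  finally have A: "a * (m0 * x0 + m1 * x1) = 0" .
  have "b * (m0 * x0 + m1 * x1) = m1 * (a * x0 + b * x1) + x0 * (b * m0 - a * m1)" by (simp add: algebra_simps)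
  also have "\<dots> = 0" using assms by (simp add: algebra_simps)
  finally have B: "b * (m0 * x0 + m1 * x1) = 0" .
  show ?thesis using A B assms(3) by auto
qed

theorem corollary3p6:
  fixes c0 c1 c2 c3 :: "nat \<Rightarrow> 'k::field" and a b :: 'k
  assumes "alg_closed_field TYPE('k)"
    and "(2::'k) \<noteq> 0" and "(3::'k) \<noteq> 0"
    and "K3_quartic (twin_normal_form c0 c1 c2 c3)"
    and "coord_line_sing0 (twin_normal_form c0 c1 c2 c3) 0 1"
    and "coord_line_sing0 (twin_normal_form c0 c1 c2 c3) 2 3"
    and "(a, b) \<noteq> (0, 0)"
    and "p_fiber (twin_normal_form c0 c1 c2 c3) a b"
  shows "branch_plane (twin_normal_form c0 c1 c2 c3) a b"
proof -
  let ?F = "twin_normal_form c0 c1 c2 c3"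
  note ab = assms(7)
  obtain M0 L1 L2 L3 where M02: "M0 2 = 0" and M03: "M0 3 = 0"
    and nd: "\<forall>w\<in>{M0, L1, L2, L3}. \<exists>x. a * x 0 + b * x 1 = 0 \<and> lin_form w x \<noteq> 0"
    and fib: "\<forall>x. a * x 0 + b * x 1 = 0 \<longrightarrow>
           mp_eval ?F x = lin_form M0 x * lin_form L1 x * lin_form L2 x * lin_form L3 x"
    using assms(8) unfolding p_fiber_def by blast
  define \<mu> where "\<mu> = a * M0 1 - b * M0 0"
  have mu: "\<mu> \<noteq> 0"
  proof
    assume m: "\<mu> = 0"
    from nd obtain x where x: "a * x 0 + b * x 1 = 0" "lin_form M0 x \<noteq> 0" by auto
    have "M0 0 * x 0 + M0 1 * x 1 = 0" by (rule det2[OF x(1) _ ab]) (use m in \<open>simp add: \<mu>_def\<close>)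
    then show False using x(2) by (simp add: lin_form_expand M02 M03)
  qed
  define \<alpha> where "\<alpha> = bc c2 (-b) a"
  define \<beta> where "\<beta> = bc c3 (-b) a"
  have albe: "\<alpha> \<noteq> 0 \<or> \<beta> \<noteq> 0"
  proof (rule ccontr)
    assume "\<not> (\<alpha> \<noteq> 0 \<or> \<beta> \<noteq> 0)"
    then have z: "\<alpha> = 0" "\<beta> = 0" by auto
    have "sing_pt ?F (Pst a b)"
      unfolding sing_pt_def
    proof (intro conjI allI impI)
      show "proj_pt (Pst a b)" unfolding proj_pt_def Pst_def using ab
      proof (cases "b = 0")
        case True
        then have "a \<noteq> 0" using ab by simp
        then show "\<exists>j::nat<4. (if j = 0 then - b else if j = 1 then a else 0) \<noteq> 0"
          by (intro exI[of _ 1]) simp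
      next
        case False
        then show "\<exists>j::nat<4. (if j = 0 then - b else if j = 1 then a else 0) \<noteq> 0"
          by (intro exI[of _ 0]) simp
      qed
      show "mp_eval ?F (Pst a b) = 0" by (simp add: mp_eval_twin Pst_def bc_def)
      fix i :: nat assume "i < 4"
      then have "i = 0 \<or> i = 1 \<or> i = 2 \<or> i = 3" by auto
      then show "pderiv_at ?F i (Pst a b) = 0"
        using z pderiv_P0[of c0 c1 c2 c3 a b] pderiv_P1[of c0 c1 c2 c3 a b]
          pderiv_P2[of c0 c1 c2 c3 a b] pderiv_P3[of c0 c1 c2 c3 a b] unfolding \<alpha>_def \<beta>_def by auto
    qed
    moreover have "Pst a b 2 = 0" "Pst a b 3 = 0" by (simp_all add: Pst_def)
    ultimately show False using assms(6) unfolding coord_line_sing0_def by blast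
  qed
  define A where "A = (\<lambda>L :: nat \<Rightarrow> 'k. a * L 1 - b * L 0)"
  define Q where "Q = (\<lambda>y z. a * bc c1 y z - b * bc c0 y z)"
  have key: "\<And>y z. (Q y z - \<mu> * (L1 2 * y + L1 3 * z) * (L2 2 * y + L2 3 * z) * (L3 2 * y + L3 3 * z)) = 0 \<and>
     (- \<mu> * (A L1 * (L2 2 * y + L2 3 * z) * (L3 2 * y + L3 3 * z) + A L2 * (L1 2 * y + L1 3 * z) * (L3 2 * y + L3 3 * z)
          + A L3 * (L1 2 * y + L1 3 * z) * (L2 2 * y + L2 3 * z))) = 0 \<and>
     (y * \<alpha> + z * \<beta> - \<mu> * (A L1 * A L2 * (L3 2 * y + L3 3 * z) + A L1 * A L3 * (L2 2 * y + L2 3 * z) + A L2 * A L3 * (L1 2 * y + L1 3 * z))) = 0 \<and>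
     (- \<mu> * A L1 * A L2 * A L3) = 0"
  proof -
    fix y z
    show "?thesis y z"
    proof (rule cubic_zero[OF assms(2) assms(3)])
      fix t :: 'k assume t: "t \<noteq> 0"
      define x where "x = (\<lambda>j::nat. if j = 0 then - b * t else if j = 1 then a * t else if j = 2 then y else z)"
      have "a * x 0 + b * x 1 = 0" by (simp add: x_def algebra_simps)
      then have E: "mp_eval ?F x = lin_form M0 x * lin_form L1 x * lin_form L2 x * lin_form L3 x" using fib by blast
      have lhs: "mp_eval ?F x = t * Q y z + t ^ 3 * (y * \<alpha> + z * \<beta>)"
      proof -
        have "mp_eval ?F x = (- b * t) * bc c0 y z + (a * t) * bc c1 y z + y * bc c2 ((-b) * t) (a * t) + z * bc c3 ((-b) * t) (a * t)"
          by (simp add: mp_eval_twin x_def)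
        also have "\<dots> = t * Q y z + t ^ 3 * (y * \<alpha> + z * \<beta>)"
          unfolding bc_hom Q_def \<alpha>_def \<beta>_def by (simp add: algebra_simps)
        finally show ?thesis .
      qed
      have lf: "lin_form L x = A L * t + (L 2 * y + L 3 * z)" for L
        by (simp add: lin_form_expand x_def A_def algebra_simps)
      have m0: "lin_form M0 x = \<mu> * t"
        by (simp add: lin_form_expand x_def \<mu>_def M02 M03 algebra_simps)
      have "t * Q y z + t ^ 3 * (y * \<alpha> + z * \<beta>) - (\<mu> * t) * ((A L1 * t + (L1 2 * y + L1 3 * z)) * (A L2 * t + (L2 2 * y + L2 3 * z)) * (A L3 * t + (L3 2 * y + L3 3 * z))) = 0"
        using E unfolding lhs m0 lf[of L1] lf[of L2] lf[of L3] by (simp add: mult.assoc)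
      then have "t * ((- \<mu> * A L1 * A L2 * A L3) * t ^ 3 +
          (y * \<alpha> + z * \<beta> - \<mu> * (A L1 * A L2 * (L3 2 * y + L3 3 * z) + A L1 * A L3 * (L2 2 * y + L2 3 * z) + A L2 * A L3 * (L1 2 * y + L1 3 * z))) * t ^ 2 +
          (- \<mu> * (A L1 * (L2 2 * y + L2 3 * z) * (L3 2 * y + L3 3 * z) + A L2 * (L1 2 * y + L1 3 * z) * (L3 2 * y + L3 3 * z)
          + A L3 * (L1 2 * y + L1 3 * z) * (L2 2 * y + L2 3 * z))) * t +
          (Q y z - \<mu> * (L1 2 * y + L1 3 * z) * (L2 2 * y + L2 3 * z) * (L3 2 * y + L3 3 * z))) = 0"
        unfolding expand_id .
      then show "(- \<mu> * A L1 * A L2 * A L3) * t ^ 3 +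
          (y * \<alpha> + z * \<beta> - \<mu> * (A L1 * A L2 * (L3 2 * y + L3 3 * z) + A L1 * A L3 * (L2 2 * y + L2 3 * z) + A L2 * A L3 * (L1 2 * y + L1 3 * z))) * t ^ 2 +
          (- \<mu> * (A L1 * (L2 2 * y + L2 3 * z) * (L3 2 * y + L3 3 * z) + A L2 * (L1 2 * y + L1 3 * z) * (L3 2 * y + L3 3 * z)
          + A L3 * (L1 2 * y + L1 3 * z) * (L2 2 * y + L2 3 * z))) * t +
          (Q y z - \<mu> * (L1 2 * y + L1 3 * z) * (L2 2 * y + L2 3 * z) * (L3 2 * y + L3 3 * z)) = 0"
        using t by simp
    qed
  qed
  have h3: "\<mu> * A L1 * A L2 * A L3 = 0" using key[of 0 0] by simp
  have h2: "y * \<alpha> + z * \<beta> = \<mu> * (A L1 * A L2 * (L3 2 * y + L3 3 * z) + A L1 * A L3 * (L2 2 * y + L2 3 * z) + A L2 * A L3 * (L1 2 * y + L1 3 * z))" for y z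
    using key[of y z] by simp
  have h1: "A L1 * (L2 2 * y + L2 3 * z) * (L3 2 * y + L3 3 * z) + A L2 * (L1 2 * y + L1 3 * z) * (L3 2 * y + L3 3 * z)
          + A L3 * (L1 2 * y + L1 3 * z) * (L2 2 * y + L2 3 * z) = 0" for y z
    using key[of y z] mu by simp
  have h0: "Q y z = \<mu> * (L1 2 * y + L1 3 * z) * (L2 2 * y + L2 3 * z) * (L3 2 * y + L3 3 * z)" for y z
    using key[of y z] by simp
  obtain u v r s where uv: "(u, v) \<noteq> (0, 0)" and Qf: "\<forall>y z. Q y z = (v * y - u * z)^2 * (r * y + s * z)"
    using core[OF mu albe h3 h2 h1 h0] by blast
  show ?thesis
    unfolding branch_plane_def
  proof (intro exI conjI allI)
    show "(u, v) \<noteq> (0, 0)" by (rule uv)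
    fix y z
    have "b * pderiv_at ?F 0 (pt_on_l y z) - a * pderiv_at ?F 1 (pt_on_l y z) = - Q y z"
      using pderiv_l0[of c0 c1 c2 c3 y z] pderiv_l1[of c0 c1 c2 c3 y z] by (simp add: Q_def)
    also have "\<dots> = (v * y - u * z)^2 * ((- r) * y + (- s) * z)" using Qf by (simp add: algebra_simps)
    finally show "b * pderiv_at ?F 0 (pt_on_l y z) - a * pderiv_at ?F 1 (pt_on_l y z) = (v * y - u * z)^2 * ((- r) * y + (- s) * z)" .
  qed
qed

end
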